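(* For every positive integer $n$, $$\sum_{\mathbf a\in\mathsf{PF}_n} t^{z(\mathbf a)}=\sum_{\mathbf a\in\mathsf{PF}_n} t^{\operatorname{run}(\mathbf a)}.$$
   Context: Let $[n]=\{1,\dots,n\}$. $\mathsf{PF}_n$ is the set of $\mathbf a=(a_1,\dots,a_n)\in[n]^n$ with $|\{j:a_j\le i\}|\ge i$ for every $i\in[n]$ (parking functions). For $\mathbf a\in[n]^n$, the center $Z(\mathbf a)$ is the largest subset $X=\{x_1<\dots<x_\ell\}\subseteq[n]$ with $a_{x_i}\le i$ for all $i\in[\ell]$, and $z(\mathbf a)=|Z(\mathbf a)|$. If $1\in\{a_1,\dots,a_n\}$, $\operatorname{run}(\mathbf a)=\max\{i\in[n]:[i]\subseteq\{a_1,\dots,a_n\}\}$; otherwise $\operatorname{run}(\mathbf a)=0$. *)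

theory Defs
  imports "HOL-Library.FuncSet"
begin

definition words :: "nat \<Rightarrow> (nat \<Rightarrow> nat) set" where
  "words n = {1..n} \<rightarrow>\<^sub>E {1..n}"

definition PF :: "nat \<Rightarrow> (nat \<Rightarrow> nat) set" where
  "PF n = {a \<in> words n. \<forall>i\<in>{1..n}. card {j\<in>{1..n}. a j \<le> i} \<ge> i}"

definition center_ok :: "nat \<Rightarrow> (nat \<Rightarrow> nat) \<Rightarrow> nat set \<Rightarrow> bool" where
  "center_ok n a X \<longleftrightarrow> X \<subseteq> {1..n} \<and>
     (\<forall>i<card X. a (sorted_list_of_set X ! i) \<le> i + 1)"

definition zc :: "nat \<Rightarrow> (nat \<Rightarrow> nat) \<Rightarrow> nat" where
  "zc n a = Max (card ` {X. center_ok n a X})"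

definition run :: "nat \<Rightarrow> (nat \<Rightarrow> nat) \<Rightarrow> nat" where
  "run n a = (if 1 \<in> a ` {1..n}
              then Max {i\<in>{1..n}. {1..i} \<subseteq> a ` {1..n}} else 0)"

end

theory Submission
  imports Defs "HOL-Library.Sublist"
begin


fun hh :: "nat \<Rightarrow> nat list \<Rightarrow> nat" where
  "hh 0 xs = 1"
| "hh (Suc r) [] = 0"
| "hh (Suc r) (x#xs) = hh (Suc r) xs + x * hh r (x#xs)"

lemma hh_swap: "hh r (a#b#l) = hh r (b#a#l)"
proof (induction r rule: less_induct)
  case (less r)
  show ?case
  proof (cases r)
    case 0 then show ?thesis by simp
  next
    case (Suc r')
    show ?thesis
    proof (cases r')
      case 0 then show ?thesis using Suc by simp
    next
      case (Suc r'')
      have i1: "hh r' (a#b#l) = hh r' (b#a#l)" using less \<open>r = Suc r'\<close> by simp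
      have i2: "hh r'' (a#b#l) = hh r'' (b#a#l)" using less \<open>r = Suc r'\<close> Suc by simp
      have "hh r (a#b#l) = hh r l + b * hh r' (b#l) + a * (hh r' (a#l) + b * hh r'' (b#a#l))"
        using \<open>r = Suc r'\<close> Suc i1 by simp
      moreover have "hh r (b#a#l) = hh r l + a * hh r' (a#l) + b * (hh r' (b#l) + a * hh r'' (a#b#l))"
        using \<open>r = Suc r'\<close> Suc i1 by simp
      ultimately show ?thesis using i2 by (simp add: algebra_simps)
    qed
  qed
qed

lemma hh_cong: "(\<And>r. hh r L = hh r L') \<Longrightarrow> hh r (y#L) = hh r (y#L')"
proof (induction r)
  case 0 then show ?case by simp
next
  case (Suc r) then show ?case by simp
qed

lemma hh_snoc: "hh r (ys @ [x]) = hh r (x # ys)"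
proof (induction ys arbitrary: r)
  case Nil then show ?case by simp
next
  case (Cons y ys)
  have "hh r (y # (ys @ [x])) = hh r (y # x # ys)" by (rule hh_cong) (use Cons in auto)
  also have "\<dots> = hh r (x # y # ys)" by (rule hh_swap)
  finally show ?case by simp
qed

lemma hh_rev: "hh r (rev xs) = hh r xs"
proof (induction xs arbitrary: r)
  case Nil then show ?case by simp
next
  case (Cons x xs)
  have "hh r (rev (x#xs)) = hh r (x # rev xs)" by (simp add: hh_snoc)
  also have "\<dots> = hh r (x # xs)" by (rule hh_cong) (use Cons in auto)
  finally show ?case .
qed

lemma card_words_Suc:
  assumes "finite A"
  shows "card {w. set w \<subseteq> A \<and> length w = Suc m \<and> P w}
       = (\<Sum>x\<in>A. card {w. set w \<subseteq> A \<and> length w = m \<and> P (x#w)})"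
proof -
  have fin: "\<And>x. finite {w. set w \<subseteq> A \<and> length w = m \<and> P (x#w)}"
    by (rule finite_subset[OF _ finite_lists_length_eq[OF assms, of m]]) auto
  have "{w. set w \<subseteq> A \<and> length w = Suc m \<and> P w}
      = (\<lambda>(x,w). x#w) ` (SIGMA x:A. {w. set w \<subseteq> A \<and> length w = m \<and> P (x#w)})"
    by (auto simp: length_Suc_conv image_iff)
  moreover have "inj_on (\<lambda>(x,w). x#w) (SIGMA x:A. {w. set w \<subseteq> A \<and> length w = m \<and> P (x#w)})"
    by (auto simp: inj_on_def)
  moreover have "card (SIGMA x:A. {w. set w \<subseteq> A \<and> length w = m \<and> P (x#w)})
     = (\<Sum>x\<in>A. card {w. set w \<subseteq> A \<and> length w = m \<and> P (x#w)})"
    by (rule card_SigmaI[OF assms]) (use fin in blast)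
  ultimately show ?thesis by (simp add: card_image)
qed

fun gr :: "nat \<Rightarrow> nat list \<Rightarrow> nat" where
  "gr c [] = c"
| "gr c (x#xs) = gr (if x \<le> Suc c then Suc c else c) xs"

lemma gr_ge: "c \<le> gr c xs"
  by (induction xs arbitrary: c) (auto, meson Suc_leD le_trans)

lemma hh_single: "hh r [x] = x ^ r"
  by (induction r) auto

lemma gr_filter_big: "set w \<subseteq> {1..k} \<Longrightarrow> k \<le> c \<Longrightarrow> k \<le> gr c w"
  using gr_ge[of c w] by simp

lemma card_GC:
  assumes "c \<le> k"
  shows "fact c * card {w. set w \<subseteq> {1..k} \<and> length w = m \<and> k \<le> gr c w}
    = (if k - c \<le> m then fact k * hh (m - (k-c)) (rev [0..<k-c] @ [k]) else 0)"
  using assms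
proof (induction m arbitrary: c)
  case 0
  have "{w. set w \<subseteq> {1..k} \<and> length w = 0 \<and> k \<le> gr c w} = (if k \<le> c then {[]} else {})"
    by auto
  then show ?case using 0 by auto
next
  case (Suc m)
  show ?case
  proof (cases "c = k")
    case True
    have "{w. set w \<subseteq> {1..k} \<and> length w = Suc m \<and> k \<le> gr c w}
        = {w. set w \<subseteq> {1..k} \<and> length w = Suc m}"
      using gr_ge[of c] True by auto
    then show ?thesis using True by (simp add: card_lists_length_eq hh_single)
  next
    case False
    define G where "G = (\<lambda>c. card {w. set w \<subseteq> {1..k} \<and> length w = m \<and> k \<le> gr c w})"
    have "card {w. set w \<subseteq> {1..k} \<and> length w = Suc m \<and> k \<le> gr c w}
      = (\<Sum>x\<in>{1..k}. G (if x \<le> Suc c then Suc c else c))"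
      unfolding G_def by (subst card_words_Suc) auto
    also have "\<dots> = (\<Sum>x\<in>{1..Suc c}. G (if x \<le> Suc c then Suc c else c))
         + (\<Sum>x\<in>{Suc (Suc c)..k}. G (if x \<le> Suc c then Suc c else c))"
    proof -
      have "{1..k} = {1..Suc c} \<union> {Suc (Suc c)..k}" using Suc.prems False by auto
      then show ?thesis by (simp add: sum.union_disjoint)
    qed
    also have "\<dots> = Suc c * G (Suc c) + (k - Suc c) * G c" by simp
    finally have rec: "card {w. set w \<subseteq> {1..k} \<and> length w = Suc m \<and> k \<le> gr c w}
        = Suc c * G (Suc c) + (k - Suc c) * G c" .
    have ih1: "fact (Suc c) * G (Suc c) = (if k - Suc c \<le> m then fact k * hh (m - (k - Suc c)) (rev [0..<k - Suc c] @ [k]) else 0)"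
      unfolding G_def using Suc.IH[of "Suc c"] Suc.prems False by simp
    have ih2: "fact c * G c = (if k - c \<le> m then fact k * hh (m - (k - c)) (rev [0..<k - c] @ [k]) else 0)"
      unfolding G_def using Suc.IH[of c] Suc.prems by simp
    obtain j where j: "k - c = Suc j" using Suc.prems False by (metis Suc_diff_Suc le_neq_implies_less)
    have kj: "k - Suc c = j" using j by simp
    have L: "rev [0..<k-c] @ [k] = j # (rev [0..<j] @ [k])" using j by simp
    have "fact c * card {w. set w \<subseteq> {1..k} \<and> length w = Suc m \<and> k \<le> gr c w}
        = fact (Suc c) * G (Suc c) + j * (fact c * G c)"
      using rec kj by (simp add: algebra_simps)
    also have "\<dots> = (if j \<le> m then fact k * hh (m - j) (rev [0..<j] @ [k]) else 0)
        + j * (if Suc j \<le> m then fact k * hh (m - Suc j) (j # (rev [0..<j] @ [k])) else 0)"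
      using ih1 ih2 kj j L by simp
    also have "\<dots> = (if Suc j \<le> Suc m then fact k * hh (Suc m - Suc j) (j # (rev [0..<j] @ [k])) else 0)"
    proof (cases "Suc j \<le> m")
      case True
      then obtain r where r: "m - j = Suc r" "m - Suc j = r" by (metis Suc_diff_Suc Suc_le_lessD)
      then show ?thesis using True by (simp add: algebra_simps)
    next
      case False
      then show ?thesis by (cases "j = m") auto
    qed
    finally show ?thesis using j L by simp
  qed
qed

lemma card_SC:
  assumes "S \<subseteq> {1..k}"
  shows "card {w. set w \<subseteq> {1..k} \<and> length w = m \<and> {1..k} \<subseteq> S \<union> set w}
    = (if k - card S \<le> m then fact (k - card S) * hh (m - (k - card S)) ([card S..<k] @ [k]) else 0)"
  using assms
proof (induction m arbitrary: S)
  case 0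
  have cS: "card S \<le> k" using card_mono[OF _ 0] by simp
  have "{1..k} \<subseteq> S \<longleftrightarrow> card S = k"
  proof
    assume "{1..k} \<subseteq> S" then have "S = {1..k}" using 0 by auto
    then show "card S = k" by simp
  next
    assume "card S = k" then show "{1..k} \<subseteq> S"
      using 0 card_subset_eq[of "{1..k}" S] by simp
  qed
  moreover have "{w. set w \<subseteq> {1..k} \<and> length w = 0 \<and> {1..k} \<subseteq> S \<union> set w}
     = (if {1..k} \<subseteq> S then {[]} else {})" by auto
  ultimately show ?case using cS by auto
next
  case (Suc m)
  have cS: "card S \<le> k" using card_mono[OF _ Suc.prems] by simp
  show ?case
  proof (cases "card S = k")
    case True
    then have "S = {1..k}" using Suc.prems card_subset_eq[of "{1..k}" S] by simp
    then have "{w. set w \<subseteq> {1..k} \<and> length w = Suc m \<and> {1..k} \<subseteq> S \<union> set w}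
        = {w. set w \<subseteq> {1..k} \<and> length w = Suc m}" by auto
    then show ?thesis using True by (simp add: card_lists_length_eq hh_single)
  next
    case False
    define d where "d = card S"
    define F where "F = (\<lambda>d. (if k - d \<le> m then fact (k - d) * hh (m - (k - d)) ([d..<k] @ [k]) else 0))"
    have fS: "finite S" using Suc.prems finite_subset by blast
    have "card {w. set w \<subseteq> {1..k} \<and> length w = Suc m \<and> {1..k} \<subseteq> S \<union> set w}
      = (\<Sum>x\<in>{1..k}. card {w. set w \<subseteq> {1..k} \<and> length w = m \<and> {1..k} \<subseteq> insert x S \<union> set w})"
      by (subst card_words_Suc) auto
    also have "\<dots> = (\<Sum>x\<in>{1..k}. F (card (insert x S)))"
    proof (rule sum.cong)
      fix x assume "x \<in> {1..k}"
      then have "insert x S \<subseteq> {1..k}" using Suc.prems by auto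
      from Suc.IH[OF this] show "card {w. set w \<subseteq> {1..k} \<and> length w = m \<and> {1..k} \<subseteq> insert x S \<union> set w} = F (card (insert x S))"
        unfolding F_def by simp
    qed simp
    also have "\<dots> = (\<Sum>x\<in>S. F (card (insert x S))) + (\<Sum>x\<in>{1..k}-S. F (card (insert x S)))"
      using Suc.prems by (metis (no_types, lifting) Diff_partition finite_Diff finite_atLeastAtMost fS sum.union_disjoint Diff_disjoint)
    also have "\<dots> = d * F d + (k - d) * F (Suc d)"
    proof -
      have "(\<Sum>x\<in>S. F (card (insert x S))) = d * F d" by (simp add: insert_absorb d_def)
      moreover have "(\<Sum>x\<in>{1..k}-S. F (card (insert x S))) = (\<Sum>x\<in>{1..k}-S. F (Suc d))"
        by (rule sum.cong) (use fS d_def in auto)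
      moreover have "card ({1..k}-S) = k - d" using Suc.prems fS d_def by (simp add: card_Diff_subset)
      ultimately show ?thesis by simp
    qed
    finally have rec: "card {w. set w \<subseteq> {1..k} \<and> length w = Suc m \<and> {1..k} \<subseteq> S \<union> set w}
        = d * F d + (k - d) * F (Suc d)" .
    obtain j where j: "k - d = Suc j" using cS False d_def by (metis Suc_diff_Suc le_neq_implies_less)
    have kj: "k - Suc d = j" using j by simp
    have L: "[d..<k] @ [k] = d # ([Suc d..<k] @ [k])" using j by (simp add: upt_conv_Cons)
    have fj: "fact (k - d) = Suc j * fact j" using j by simp
    have "d * F d + (k - d) * F (Suc d)
       = d * (if Suc j \<le> m then fact (Suc j) * hh (m - Suc j) (d # ([Suc d..<k] @ [k])) else 0)
        + Suc j * (if j \<le> m then fact j * hh (m - j) ([Suc d..<k] @ [k]) else 0)"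
      unfolding F_def using j kj L by simp
    also have "\<dots> = (if Suc j \<le> Suc m then fact (Suc j) * hh (Suc m - Suc j) (d # ([Suc d..<k] @ [k])) else 0)"
    proof (cases "Suc j \<le> m")
      case True
      then obtain r where r: "m - j = Suc r" "m - Suc j = r" by (metis Suc_diff_Suc Suc_le_lessD)
      then show ?thesis using True by (simp add: algebra_simps)
    next
      case False
      then show ?thesis by (cases "j = m") (auto simp: algebra_simps)
    qed
    finally show ?thesis using rec j L d_def by simp
  qed
qed

lemma count_eq:
  "card {w. set w \<subseteq> {1..k} \<and> length w = m \<and> k \<le> gr 0 w}
   = card {w. set w \<subseteq> {1..k} \<and> length w = m \<and> {1..k} \<subseteq> set w}"
proof -
  have a: "card {w. set w \<subseteq> {1..k} \<and> length w = m \<and> k \<le> gr 0 w}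
    = (if k \<le> m then fact k * hh (m - k) (rev [0..<k] @ [k]) else 0)"
    using card_GC[of 0 k m] by simp
  have b: "card {w. set w \<subseteq> {1..k} \<and> length w = m \<and> {1..k} \<subseteq> {} \<union> set w}
    = (if k \<le> m then fact k * hh (m - k) ([0..<k] @ [k]) else 0)"
    using card_SC[of "{}" k m] by simp
  have "hh r (rev [0..<k] @ [k]) = hh r ([0..<k] @ [k])" for r
    by (metis hh_rev hh_snoc rev.simps(2))
  then show ?thesis using a b by simp
qed



definition okp :: "(nat \<Rightarrow> nat) \<Rightarrow> nat \<Rightarrow> nat list \<Rightarrow> bool" where
  "okp a c qs \<longleftrightarrow> (\<forall>i<length qs. a (qs!i) \<le> c + i + 1)"

lemma gr_mono: "c \<le> c' \<Longrightarrow> gr c xs \<le> gr c' xs"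
proof (induction xs arbitrary: c c')
  case Nil then show ?case by simp
next
  case (Cons x xs)
  have "(if x \<le> Suc c then Suc c else c) \<le> (if x \<le> Suc c' then Suc c' else c')"
    using Cons.prems by auto
  then show ?case using Cons.IH by simp
qed

lemma L1: "\<exists>qs. subseq qs ps \<and> okp a c qs \<and> c + length qs = gr c (map a ps)"
proof (induction ps arbitrary: c)
  case Nil then show ?case by (auto simp: okp_def)
next
  case (Cons p ps)
  show ?case
  proof (cases "a p \<le> Suc c")
    case True
    obtain qs where q: "subseq qs ps" "okp a (Suc c) qs" "Suc c + length qs = gr (Suc c) (map a ps)"
      using Cons.IH by blast
    have "okp a c (p#qs)" unfolding okp_def
    proof (intro allI impI)
      fix i assume "i < length (p#qs)"
      then show "a ((p#qs)!i) \<le> c + i + 1"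
        using True q(2) unfolding okp_def by (cases i) auto
    qed
    then show ?thesis using q True by (intro exI[of _ "p#qs"]) auto
  next
    case False
    obtain qs where q: "subseq qs ps" "okp a c qs" "c + length qs = gr c (map a ps)"
      using Cons.IH by blast
    then show ?thesis using False by (intro exI[of _ qs]) auto
  qed
qed

lemma L2: "subseq qs ps \<Longrightarrow> okp a c qs \<Longrightarrow> c + length qs \<le> gr c (map a ps)"
proof (induction ps arbitrary: c qs)
  case Nil then show ?case by simp
next
  case (Cons p ps)
  show ?case
  proof (cases qs)
    case Nil then show ?thesis using gr_ge[of c "map a (p#ps)"] by simp
  next
    case (Cons q qs')
    show ?thesis
    proof (cases "q = p")
      case True
      have "subseq qs' ps" using Cons.prems \<open>qs = q#qs'\<close> True by simp
      moreover have "okp a (Suc c) qs'" using Cons.prems(2) \<open>qs = q#qs'\<close> unfolding okp_def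
        by (metis add_Suc add_Suc_right length_Cons not_less_eq nth_Cons_Suc)
      moreover have "a p \<le> Suc c" using Cons.prems(2) \<open>qs = q#qs'\<close> True unfolding okp_def by force
      ultimately show ?thesis using Cons.IH[of qs' "Suc c"] \<open>qs = q#qs'\<close> by simp
    next
      case False
      have "subseq qs ps" using Cons.prems \<open>qs = q#qs'\<close> False by simp
      then have "c + length qs \<le> gr c (map a ps)" using Cons.IH Cons.prems(2) by blast
      also have "\<dots> \<le> gr (if a p \<le> Suc c then Suc c else c) (map a ps)" by (rule gr_mono) auto
      finally show ?thesis by simp
    qed
  qed
qed

lemma subseq_sorted: "subseq qs ps \<Longrightarrow> sorted_wrt (<) ps \<Longrightarrow> sorted_wrt (<) qs"
proof (induction rule: list_emb.induct)
  case (list_emb_Nil ys) then show ?case by simp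
next
  case (list_emb_Cons xs ys y) then show ?case by simp
next
  case (list_emb_Cons2 x y xs ys)
  then show ?case by (auto dest: list_emb_set)
qed

lemma zc_eq: "zc n a = gr 0 (map a [1..<Suc n])"
proof -
  define g where "g = gr 0 (map a [1..<Suc n])"
  obtain qs where q: "subseq qs [1..<Suc n]" "okp a 0 qs" "length qs = g"
    using L1[of "[1..<Suc n]" a 0] unfolding g_def by auto
  have sq: "sorted_wrt (<) qs" using subseq_sorted[OF q(1)] sorted_wrt_upt by blast
  have sub: "set qs \<subseteq> {1..n}"
  proof
    fix x assume "x \<in> set qs"
    then obtain y where "y \<in> set [1..<Suc n]" "x = y" using list_emb_set[OF q(1)] by blast
    then show "x \<in> {1..n}" by (simp del: upt_Suc)
  qed
  have sl: "sorted_list_of_set (set qs) = qs"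
    using sq by (simp add: sorted_list_of_set_sort_remdups distinct_remdups_id sorted_sort_id strict_sorted_iff)
  have cq: "card (set qs) = length qs" using sq by (simp add: strict_sorted_iff distinct_card)
  have ok: "center_ok n a (set qs)" unfolding center_ok_def
    using sub q(2) sl cq unfolding okp_def by auto
  have ub: "card X \<le> g" if "center_ok n a X" for X
  proof -
    have X: "X \<subseteq> {1..n}" using that unfolding center_ok_def by simp
    then have fX: "finite X" using finite_subset by blast
    define ls where "ls = sorted_list_of_set X"
    have s1: "sorted ls" "distinct ls" "set ls = X" using fX unfolding ls_def by auto
    have s2: "sorted (filter (\<lambda>x. x \<in> X) [1..<Suc n])" "distinct (filter (\<lambda>x. x \<in> X) [1..<Suc n])"
      by (intro sorted_wrt_filter sorted_upt) simp
    have s3: "set (filter (\<lambda>x. x \<in> X) [1..<Suc n]) = X" using X by auto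
    have "ls = filter (\<lambda>x. x \<in> X) [1..<Suc n]"
      using sorted_distinct_set_unique[OF s1(1) s1(2) s2(1) s2(2)] s1(3) s3 by simp
    then have "subseq ls [1..<Suc n]" by simp
    moreover have "okp a 0 ls" using that unfolding center_ok_def okp_def ls_def
      using fX by auto
    ultimately have "0 + length ls \<le> g" unfolding g_def by (rule L2)
    then show ?thesis unfolding ls_def by simp
  qed
  have fin: "finite {X. center_ok n a X}"
    by (rule finite_subset[of _ "Pow {1..n}"]) (auto simp: center_ok_def)
  show ?thesis unfolding zc_def g_def[symmetric]
  proof (rule Max_eqI)
    show "finite (card ` {X. center_ok n a X})" using fin by simp
    show "\<And>y. y \<in> card ` {X. center_ok n a X} \<Longrightarrow> y \<le> g" using ub by blast
    show "g \<in> card ` {X. center_ok n a X}" using ok cq q(3) by (metis (mono_tags) image_eqI mem_Collect_eq)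
  qed
qed

lemma run_ge:
  assumes "a ` {1..n} \<subseteq> {1..n}" "1 \<le> k"
  shows "k \<le> run n a \<longleftrightarrow> {1..k} \<subseteq> a ` {1..n}"
proof
  assume h: "k \<le> run n a"
  then have one: "1 \<in> a ` {1..n}" using assms(2) unfolding run_def by (auto split: if_splits)
  then have n1: "1 \<le> n" by auto
  define T where "T = {i\<in>{1..n}. {1..i} \<subseteq> a ` {1..n}}"
  have "1 \<in> T" using one n1 unfolding T_def by auto
  then have "Max T \<in> T" by (intro Max_in) (auto simp: T_def)
  moreover have "k \<le> Max T" using h one unfolding run_def T_def by simp
  ultimately show "{1..k} \<subseteq> a ` {1..n}" unfolding T_def by auto
next
  assume h: "{1..k} \<subseteq> a ` {1..n}"
  have one: "1 \<in> a ` {1..n}" using h assms(2) by auto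
  have "k \<in> {1..k}" using assms(2) by simp
  then have kn: "k \<le> n" using h assms(1) by fastforce
  define T where "T = {i\<in>{1..n}. {1..i} \<subseteq> a ` {1..n}}"
  have "k \<in> T" using h kn assms(2) unfolding T_def by auto
  then have "k \<le> Max T" by (intro Max_ge) (auto simp: T_def)
  then show "k \<le> run n a" using one unfolding run_def T_def by simp
qed



declare upt_Suc[simp del]

lemma gr_le: "gr c w \<le> c + length w"
proof (induction w arbitrary: c)
  case Nil then show ?case by simp
next
  case (Cons x w)
  have "gr (if x \<le> Suc c then Suc c else c) w \<le> (if x \<le> Suc c then Suc c else c) + length w"
    by (rule Cons.IH)
  then show ?case by (auto split: if_splits)
qed

lemma gr_count: "c \<le> i \<Longrightarrow> min (gr c w) i \<le> c + length (filter (\<lambda>x. x \<le> i) w)"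
proof (induction w arbitrary: c)
  case Nil then show ?case by simp
next
  case (Cons x w)
  show ?case
  proof (cases "x \<le> Suc c")
    case True
    show ?thesis
    proof (cases "Suc c \<le> i")
      case True2: True
      have "min (gr (Suc c) w) i \<le> Suc c + length (filter (\<lambda>x. x \<le> i) w)" using Cons.IH True2 by blast
      then show ?thesis using True True2 by simp
    next
      case False
      then have "c = i" using Cons.prems by simp
      then show ?thesis by simp
    qed
  next
    case False
    have "min (gr c w) i \<le> c + length (filter (\<lambda>x. x \<le> i) w)" using Cons.IH Cons.prems by blast
    then show ?thesis using False by simp
  qed
qed

lemma gr_filter: "k \<le> gr c xs \<longleftrightarrow> k \<le> gr c (filter (\<lambda>x. x \<le> k) xs)"
proof (induction xs arbitrary: c)
  case Nil then show ?case by simp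
next
  case (Cons x xs)
  show ?case
  proof (cases "k \<le> c")
    case True
    have "c \<le> gr c (x#xs)" "c \<le> gr c (filter (\<lambda>x. x \<le> k) (x#xs))" by (rule gr_ge)+
    then show ?thesis using True by linarith
  next
    case False
    show ?thesis
    proof (cases "x \<le> k")
      case True then show ?thesis using Cons.IH by simp
    next
      case False2: False
      then have "\<not> x \<le> Suc c" using False by simp
      then show ?thesis using Cons.IH False2 by simp
    qed
  qed
qed

definition LPF :: "nat \<Rightarrow> nat list set" where
  "LPF n = {xs. set xs \<subseteq> {1..n} \<and> length xs = n \<and> (\<forall>i\<in>{1..n}. i \<le> length (filter (\<lambda>x. x \<le> i) xs))}"

lemma cnt: "card {j\<in>{1..n}. P (a j)} = length (filter P (map a [1..<Suc n]))"
proof -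
  have "length (filter P (map a [1..<Suc n])) = length (filter (P \<circ> a) [1..<Suc n])"
    by (simp add: filter_map)
  also have "\<dots> = card (set (filter (P \<circ> a) [1..<Suc n]))"
    by (rule distinct_card[symmetric]) simp
  also have "set (filter (P \<circ> a) [1..<Suc n]) = {j\<in>{1..n}. P (a j)}"
    by (auto simp del: upt_Suc)
  finally show ?thesis by simp
qed

lemma img_set: "a ` {1..n} = set (map a [1..<Suc n])"
  by (auto simp del: upt_Suc)

lemma PF_list: "card {a\<in>PF n. Q (map a [1..<Suc n])} = card {xs\<in>LPF n. Q xs}"
proof -
  let ?L = "\<lambda>a. map a [1..<Suc n]"
  have inj: "inj_on ?L {a\<in>PF n. Q (?L a)}"
  proof (rule inj_onI)
    fix a b assume a: "a \<in> {a\<in>PF n. Q (?L a)}" and b: "b \<in> {a\<in>PF n. Q (?L a)}" and e: "?L a = ?L b"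
    have "a \<in> words n" "b \<in> words n" using a b by (auto simp: PF_def)
    then show "a = b" unfolding words_def
    proof (rule PiE_ext)
      fix i assume "i \<in> {1..n}"
      then have "i - 1 < n" "[1..<Suc n] ! (i - 1) = i" by auto
      then have 1: "a i = ?L a ! (i - 1)" and 3: "?L b ! (i - 1) = b i" by simp_all
      have 2: "?L a ! (i - 1) = ?L b ! (i - 1)" using e by (rule arg_cong)
      show "a i = b i" by (rule trans[OF trans[OF 1 2] 3])
    qed
  qed
  have "?L ` {a\<in>PF n. Q (?L a)} = {xs\<in>LPF n. Q xs}"
  proof
    show "?L ` {a\<in>PF n. Q (?L a)} \<subseteq> {xs\<in>LPF n. Q xs}"
    proof
      fix xs assume "xs \<in> ?L ` {a\<in>PF n. Q (?L a)}"
      then obtain a where a: "a \<in> PF n" "Q (?L a)" "xs = ?L a" by blast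
      have w: "a \<in> words n" and c: "\<forall>i\<in>{1..n}. card {j\<in>{1..n}. a j \<le> i} \<ge> i"
        using a(1) by (auto simp: PF_def)
      have "set xs \<subseteq> {1..n}"
      proof
        fix x assume "x \<in> set xs"
        then have "x \<in> a ` {1..n}" using a(3) img_set[of a n] by simp
        then obtain j where j: "j \<in> {1..n}" "x = a j" by blast
        have "a j \<in> {1..n}" using PiE_mem[OF w[unfolded words_def] j(1)] .
        then show "x \<in> {1..n}" using j by simp
      qed
      moreover have "\<forall>i\<in>{1..n}. i \<le> length (filter (\<lambda>x. x \<le> i) xs)"
      proof
        fix i assume i: "i \<in> {1..n}"
        have "card {j\<in>{1..n}. a j \<le> i} = length (filter (\<lambda>x. x \<le> i) (?L a))" by (rule cnt)
        moreover have "i \<le> card {j\<in>{1..n}. a j \<le> i}" using c i by blast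
        ultimately show "i \<le> length (filter (\<lambda>x. x \<le> i) xs)" using a(3) by simp
      qed
      ultimately show "xs \<in> {xs\<in>LPF n. Q xs}" using a by (simp add: LPF_def)
    qed
  next
    show "{xs\<in>LPF n. Q xs} \<subseteq> ?L ` {a\<in>PF n. Q (?L a)}"
    proof
      fix xs assume xs: "xs \<in> {xs\<in>LPF n. Q xs}"
      define a where "a = (\<lambda>j. if j \<in> {1..n} then xs ! (j - 1) else undefined)"
      have len: "length xs = n" and sx: "set xs \<subseteq> {1..n}"
        and cx: "\<forall>i\<in>{1..n}. i \<le> length (filter (\<lambda>x. x \<le> i) xs)" using xs by (auto simp: LPF_def)
      have La: "?L a = xs"
      proof (rule nth_equalityI)
        show "length (?L a) = length xs" using len by simp
        fix i assume "i < length (?L a)"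
        then have "i < n" by simp
        then show "?L a ! i = xs ! i" unfolding a_def by (simp del: upt_Suc)
      qed
      have "a j \<in> {1..n}" if "j \<in> {1..n}" for j
      proof -
        have "j - 1 < length xs" using that len by auto
        then have "xs ! (j - 1) \<in> set xs" by (rule nth_mem)
        then show ?thesis using sx that unfolding a_def by auto
      qed
      moreover have "a \<in> extensional {1..n}" unfolding a_def extensional_def by simp
      ultimately have aw: "a \<in> words n" unfolding words_def by (simp add: PiE_iff)
      have "\<forall>i\<in>{1..n}. card {j\<in>{1..n}. a j \<le> i} \<ge> i"
      proof
        fix i assume i: "i \<in> {1..n}"
        have "card {j\<in>{1..n}. a j \<le> i} = length (filter (\<lambda>x. x \<le> i) (?L a))" by (rule cnt)
        also have "?L a = xs" by (rule La)
        finally have "card {j\<in>{1..n}. a j \<le> i} = length (filter (\<lambda>x. x \<le> i) xs)" .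
        moreover have "i \<le> length (filter (\<lambda>x. x \<le> i) xs)" using cx i by blast
        ultimately show "card {j\<in>{1..n}. a j \<le> i} \<ge> i" by linarith
      qed
      then have "a \<in> PF n" unfolding PF_def using aw by simp
      then show "xs \<in> ?L ` {a\<in>PF n. Q (?L a)}" using La xs by (intro image_eqI[of xs _ a]) auto
    qed
  qed
  then show ?thesis using card_image[OF inj] by simp
qed



definition msk :: "nat \<Rightarrow> nat list \<Rightarrow> nat list" where
  "msk k xs = map (\<lambda>x. if x \<le> k then 0 else x) xs"
definition sm :: "nat \<Rightarrow> nat list \<Rightarrow> nat list" where
  "sm k xs = filter (\<lambda>x. x \<le> k) xs"
definition nz :: "nat list \<Rightarrow> nat" where
  "nz ms = length (filter (\<lambda>x. x = 0) ms)"

fun merge :: "nat list \<Rightarrow> nat list \<Rightarrow> nat list" where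
  "merge [] ws = []"
| "merge (m#ms) ws = (if m = 0 then hd ws # merge ms (tl ws) else m # merge ms ws)"

definition MS :: "nat \<Rightarrow> nat \<Rightarrow> nat list set" where
  "MS n k = {ms. set ms \<subseteq> {0..n} \<and> (\<forall>x\<in>set ms. x \<noteq> 0 \<longrightarrow> k < x) \<and> length ms = n \<and>
     (\<forall>i\<in>{k..n}. i \<le> length (filter (\<lambda>x. x \<le> i) ms))}"

lemma msk_sm_inj: "msk k xs = msk k ys \<Longrightarrow> sm k xs = sm k ys \<Longrightarrow> xs = ys"
proof (induction xs arbitrary: ys)
  case Nil then show ?case by (cases ys) (auto simp: msk_def)
next
  case (Cons x xs)
  then show ?case by (cases ys) (auto simp: msk_def sm_def split: if_splits)
qed

lemma merge_props:
  "nz ms = length ws \<Longrightarrow> \<forall>x\<in>set ws. 0 < x \<and> x \<le> k \<Longrightarrow> \<forall>x\<in>set ms. x \<noteq> 0 \<longrightarrow> k < x \<Longrightarrow>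
   msk k (merge ms ws) = ms \<and> sm k (merge ms ws) = ws \<and> length (merge ms ws) = length ms \<and>
   set (merge ms ws) \<subseteq> (set ms - {0}) \<union> set ws"
proof (induction ms arbitrary: ws)
  case Nil then show ?case by (simp add: nz_def msk_def sm_def)
next
  case (Cons m ms)
  show ?case
  proof (cases "m = 0")
    case True
    then obtain w ws' where ws: "ws = w # ws'" using Cons.prems(1) by (cases ws) (auto simp: nz_def)
    have "nz ms = length ws'" using Cons.prems(1) True ws by (simp add: nz_def)
    then have ih: "msk k (merge ms ws') = ms \<and> sm k (merge ms ws') = ws' \<and> length (merge ms ws') = length ms \<and>
        set (merge ms ws') \<subseteq> (set ms - {0}) \<union> set ws'" using Cons.IH Cons.prems ws by simp
    have "0 < w \<and> w \<le> k" using Cons.prems(2) ws by simp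
    then show ?thesis using ih True ws by (auto simp: msk_def sm_def)
  next
    case False
    have "nz ms = length ws" using Cons.prems(1) False by (simp add: nz_def)
    then have ih: "msk k (merge ms ws) = ms \<and> sm k (merge ms ws) = ws \<and> length (merge ms ws) = length ms \<and>
        set (merge ms ws) \<subseteq> (set ms - {0}) \<union> set ws" using Cons.IH Cons.prems by simp
    have "k < m" using Cons.prems(3) False by simp
    then show ?thesis using ih False by (auto simp: msk_def sm_def)
  qed
qed

lemma len_filter_msk: "k \<le> i \<Longrightarrow> length (filter (\<lambda>x. x \<le> i) (msk k xs)) = length (filter (\<lambda>x. x \<le> i) xs)"
  by (induction xs) (auto simp: msk_def)

lemma nz_msk: "nz (msk k xs) = length (sm k xs)"
  by (induction xs) (auto simp: msk_def sm_def nz_def)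

lemma filter_sm: "i \<le> k \<Longrightarrow> filter (\<lambda>x. x \<le> i) (sm k xs) = filter (\<lambda>x. x \<le> i) xs"
  by (induction xs) (auto simp: sm_def)

lemma decomp:
  assumes P1: "\<And>w i. P w \<Longrightarrow> set w \<subseteq> {1..k} \<Longrightarrow> i < k \<Longrightarrow> i \<le> length (filter (\<lambda>x. x \<le> i) w)"
    and P2: "\<And>w. P w \<Longrightarrow> set w \<subseteq> {1..k} \<Longrightarrow> k \<le> length w"
  shows "card {xs\<in>LPF n. P (sm k xs)} = (\<Sum>ms\<in>MS n k. card {w. set w \<subseteq> {1..k} \<and> length w = nz ms \<and> P w})"
proof -
  let ?phi = "\<lambda>xs. (msk k xs, sm k xs)"
  let ?W = "\<lambda>ms. {w. set w \<subseteq> {1..k} \<and> length w = nz ms \<and> P w}"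
  have inj: "inj_on ?phi {xs\<in>LPF n. P (sm k xs)}"
    by (rule inj_onI) (auto intro: msk_sm_inj)
  have img: "?phi ` {xs\<in>LPF n. P (sm k xs)} = (SIGMA ms:MS n k. ?W ms)"
  proof
    show "?phi ` {xs\<in>LPF n. P (sm k xs)} \<subseteq> (SIGMA ms:MS n k. ?W ms)"
    proof
      fix p assume "p \<in> ?phi ` {xs\<in>LPF n. P (sm k xs)}"
      then obtain xs where xs: "xs \<in> LPF n" "P (sm k xs)" "p = ?phi xs" by blast
      have sx: "set xs \<subseteq> {1..n}" and lx: "length xs = n"
        and cx: "\<forall>i\<in>{1..n}. i \<le> length (filter (\<lambda>x. x \<le> i) xs)" using xs(1) by (auto simp: LPF_def)
      have "set (msk k xs) \<subseteq> {0..n}" using sx by (auto simp: msk_def)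
      moreover have "\<forall>x\<in>set (msk k xs). x \<noteq> 0 \<longrightarrow> k < x" by (auto simp: msk_def)
      moreover have "length (msk k xs) = n" using lx by (simp add: msk_def)
      moreover have "\<forall>i\<in>{k..n}. i \<le> length (filter (\<lambda>x. x \<le> i) (msk k xs))"
      proof
        fix i assume i: "i \<in> {k..n}"
        show "i \<le> length (filter (\<lambda>x. x \<le> i) (msk k xs))"
        proof (cases "i = 0")
          case True then show ?thesis by simp
        next
          case False
          then have "i \<le> length (filter (\<lambda>x. x \<le> i) xs)" using cx i by auto
          then show ?thesis using len_filter_msk[of k i xs] i by simp
        qed
      qed
      ultimately have "msk k xs \<in> MS n k" by (simp add: MS_def)
      moreover have "sm k xs \<in> ?W (msk k xs)" using sx xs(2) nz_msk[of k xs] by (auto simp: sm_def)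
      ultimately show "p \<in> (SIGMA ms:MS n k. ?W ms)" using xs(3) by simp
    qed
  next
    show "(SIGMA ms:MS n k. ?W ms) \<subseteq> ?phi ` {xs\<in>LPF n. P (sm k xs)}"
    proof
      fix p assume "p \<in> (SIGMA ms:MS n k. ?W ms)"
      then obtain ms w where p: "p = (ms, w)" "ms \<in> MS n k" "w \<in> ?W ms" by blast
      have ms: "set ms \<subseteq> {0..n}" "\<forall>x\<in>set ms. x \<noteq> 0 \<longrightarrow> k < x" "length ms = n"
        "\<forall>i\<in>{k..n}. i \<le> length (filter (\<lambda>x. x \<le> i) ms)" using p(2) by (auto simp: MS_def)
      have w: "set w \<subseteq> {1..k}" "length w = nz ms" "P w" using p(3) by auto
      have w2: "\<forall>x\<in>set w. 0 < x \<and> x \<le> k" using w(1) by auto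
      define xs where "xs = merge ms w"
      have m: "msk k xs = ms" "sm k xs = w" "length xs = length ms" "set xs \<subseteq> (set ms - {0}) \<union> set w"
        using merge_props[OF w(2)[symmetric] w2 ms(2)] unfolding xs_def by auto
      have kn: "k \<le> n"
      proof -
        have "k \<le> length w" using P2 w(3) w(1) by blast
        also have "\<dots> = nz ms" by (rule w(2))
        also have "\<dots> \<le> length ms" unfolding nz_def by (rule length_filter_le)
        finally show ?thesis using ms(3) by simp
      qed
      have "set xs \<subseteq> {1..n}"
      proof
        fix x assume "x \<in> set xs"
        then have "x \<in> set ms - {0} \<or> x \<in> set w" using m(4) by blast
        then show "x \<in> {1..n}"
        proof
          assume "x \<in> set ms - {0}" then show ?thesis using ms(1) by auto
        next
          assume "x \<in> set w" then show ?thesis using w(1) kn by auto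
        qed
      qed
      moreover have "length xs = n" using m(3) ms(3) by simp
      moreover have "\<forall>i\<in>{1..n}. i \<le> length (filter (\<lambda>x. x \<le> i) xs)"
      proof
        fix i assume i: "i \<in> {1..n}"
        show "i \<le> length (filter (\<lambda>x. x \<le> i) xs)"
        proof (cases "k \<le> i")
          case True
          have "i \<le> length (filter (\<lambda>x. x \<le> i) ms)" using ms(4) i True by auto
          then show ?thesis using len_filter_msk[OF True, of xs] m(1) by simp
        next
          case False
          have "i \<le> length (filter (\<lambda>x. x \<le> i) w)" using P1[OF w(3) w(1)] False by simp
          then show ?thesis using filter_sm[of i k xs] m(2) False by simp
        qed
      qed
      ultimately have "xs \<in> LPF n" by (simp add: LPF_def)
      moreover have "P (sm k xs)" using m(2) w(3) by simp
      ultimately show "p \<in> ?phi ` {xs\<in>LPF n. P (sm k xs)}" using p(1) m(1,2)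
        by (intro image_eqI[of p _ xs]) auto
    qed
  qed
  have finMS: "finite (MS n k)"
    by (rule finite_subset[OF _ finite_lists_length_eq[of "{0..n}" n]]) (auto simp: MS_def)
  have finW: "\<forall>ms\<in>MS n k. finite (?W ms)"
  proof
    fix ms
    show "finite (?W ms)"
      by (rule finite_subset[OF _ finite_lists_length_eq[of "{1..k}" "nz ms"]]) auto
  qed
  have "card {xs\<in>LPF n. P (sm k xs)} = card (?phi ` {xs\<in>LPF n. P (sm k xs)})"
    by (rule card_image[OF inj, symmetric])
  also have "\<dots> = card (SIGMA ms:MS n k. ?W ms)" using img by simp
  also have "\<dots> = (\<Sum>ms\<in>MS n k. card (?W ms))" by (rule card_SigmaI[OF finMS finW])
  finally show ?thesis .
qed

lemma main_list:
  assumes "1 \<le> k"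
  shows "card {xs\<in>LPF n. k \<le> gr 0 xs} = card {xs\<in>LPF n. {1..k} \<subseteq> set xs}"
proof -
  have e1: "{xs\<in>LPF n. k \<le> gr 0 xs} = {xs\<in>LPF n. k \<le> gr 0 (sm k xs)}"
    using gr_filter unfolding sm_def by blast
  have e2: "{xs\<in>LPF n. {1..k} \<subseteq> set xs} = {xs\<in>LPF n. {1..k} \<subseteq> set (sm k xs)}"
    unfolding sm_def by auto
  have d1: "card {xs\<in>LPF n. k \<le> gr 0 (sm k xs)} = (\<Sum>ms\<in>MS n k. card {w. set w \<subseteq> {1..k} \<and> length w = nz ms \<and> k \<le> gr 0 w})"
  proof (rule decomp)
    fix w i assume h: "k \<le> gr 0 w" "i < k"
    have "min (gr 0 w) i \<le> 0 + length (filter (\<lambda>x. x \<le> i) w)" by (rule gr_count) simp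
    then show "i \<le> length (filter (\<lambda>x. x \<le> i) w)" using h by simp
  next
    fix w assume h: "k \<le> gr 0 w"
    then show "k \<le> length w" using gr_le[of 0 w] by simp
  qed
  have d2: "card {xs\<in>LPF n. {1..k} \<subseteq> set (sm k xs)} = (\<Sum>ms\<in>MS n k. card {w. set w \<subseteq> {1..k} \<and> length w = nz ms \<and> {1..k} \<subseteq> set w})"
  proof (rule decomp)
    fix w i assume h: "{1..k} \<subseteq> set w" "i < k"
    have "{1..i} \<subseteq> set (filter (\<lambda>x. x \<le> i) w)" using h by auto
    then have "card {1..i} \<le> card (set (filter (\<lambda>x. x \<le> i) w))" by (rule card_mono[rotated]) simp
    also have "\<dots> \<le> length (filter (\<lambda>x. x \<le> i) w)" by (rule card_length)
    finally show "i \<le> length (filter (\<lambda>x. x \<le> i) w)" by simp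
  next
    fix w assume h: "{1..k} \<subseteq> set w"
    then have "card {1..k} \<le> card (set w)" by (rule card_mono[rotated]) simp
    also have "\<dots> \<le> length w" by (rule card_length)
    finally show "k \<le> length w" by simp
  qed
  show ?thesis unfolding e1 e2 d1 d2 by (rule sum.cong) (rule refl, rule count_eq)
qed

lemma PF_fin: "finite (PF n)"
proof -
  have "PF n \<subseteq> words n" by (auto simp: PF_def)
  moreover have "finite (words n)" unfolding words_def by (rule finite_PiE) auto
  ultimately show ?thesis by (rule finite_subset)
qed

lemma ge_eq: "card {a\<in>PF n. k \<le> zc n a} = card {a\<in>PF n. k \<le> run n a}"
proof (cases "k = 0")
  case True then show ?thesis by simp
next
  case False
  then have k1: "1 \<le> k" by simp
  have "{a\<in>PF n. k \<le> zc n a} = {a\<in>PF n. k \<le> gr 0 (map a [1..<Suc n])}"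
    by (simp add: zc_eq)
  moreover have "{a\<in>PF n. k \<le> run n a} = {a\<in>PF n. {1..k} \<subseteq> set (map a [1..<Suc n])}"
  proof -
    have "k \<le> run n a \<longleftrightarrow> {1..k} \<subseteq> set (map a [1..<Suc n])" if "a \<in> PF n" for a
    proof -
      have w: "a \<in> words n" using that by (simp add: PF_def)
      have "a ` {1..n} \<subseteq> {1..n}" using PiE_mem[OF w[unfolded words_def]] by blast
      then show ?thesis using run_ge[OF _ k1] img_set[of a n] by simp
    qed
    then show ?thesis by blast
  qed
  moreover have "card {a\<in>PF n. k \<le> gr 0 (map a [1..<Suc n])} = card {xs\<in>LPF n. k \<le> gr 0 xs}"
    by (rule PF_list)
  moreover have "card {a\<in>PF n. {1..k} \<subseteq> set (map a [1..<Suc n])} = card {xs\<in>LPF n. {1..k} \<subseteq> set xs}"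
    by (rule PF_list)
  ultimately show ?thesis using main_list[OF k1, of n] by simp
qed

theorem theorem3p5:
  fixes n :: nat and t :: "'a::comm_semiring_1"
  assumes "n \<ge> 1"
  shows "(\<Sum>a\<in>PF n. t ^ zc n a) = (\<Sum>a\<in>PF n. t ^ run n a)"
proof -
  have lev: "card {a\<in>PF n. zc n a = k} = card {a\<in>PF n. run n a = k}" for k
  proof -
    have "\<And>f. {a\<in>PF n. f a = k} = {a\<in>PF n. k \<le> f a} - {a\<in>PF n. Suc k \<le> f a}" by auto
    moreover have "\<And>f. card ({a\<in>PF n. k \<le> f a} - {a\<in>PF n. Suc k \<le> f a})
        = card {a\<in>PF n. k \<le> f a} - card {a\<in>PF n. Suc k \<le> f a}"
      by (rule card_Diff_subset) (auto intro: finite_subset[OF _ PF_fin])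
    ultimately show ?thesis using ge_eq[of n k] ge_eq[of n "Suc k"] by simp
  qed
  define T where "T = zc n ` PF n \<union> run n ` PF n"
  have fT: "finite T" unfolding T_def using PF_fin by simp
  have sum_lev: "(\<Sum>a\<in>PF n. t ^ f a) = (\<Sum>y\<in>T. of_nat (card {a\<in>PF n. f a = y}) * t ^ y)"
    if "f ` PF n \<subseteq> T" for f :: "(nat \<Rightarrow> nat) \<Rightarrow> nat"
  proof -
    have "(\<Sum>a\<in>PF n. t ^ f a) = (\<Sum>y\<in>T. \<Sum>a\<in>{x. x \<in> PF n \<and> f x = y}. t ^ f a)"
      by (rule sum.group[symmetric, OF PF_fin fT that])
    also have "\<dots> = (\<Sum>y\<in>T. of_nat (card {a\<in>PF n. f a = y}) * t ^ y)"
    proof (rule sum.cong)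
      fix y
      have "(\<Sum>a\<in>{x. x \<in> PF n \<and> f x = y}. t ^ f a) = (\<Sum>a\<in>{x. x \<in> PF n \<and> f x = y}. t ^ y)"
        by (rule sum.cong) auto
      then show "(\<Sum>a\<in>{x. x \<in> PF n \<and> f x = y}. t ^ f a) = of_nat (card {a\<in>PF n. f a = y}) * t ^ y"
        by simp
    qed simp
    finally show ?thesis .
  qed
  have "(\<Sum>a\<in>PF n. t ^ zc n a) = (\<Sum>y\<in>T. of_nat (card {a\<in>PF n. zc n a = y}) * t ^ y)"
    by (rule sum_lev) (auto simp: T_def)
  also have "\<dots> = (\<Sum>y\<in>T. of_nat (card {a\<in>PF n. run n a = y}) * t ^ y)"
    using lev by simp
  also have "\<dots> = (\<Sum>a\<in>PF n. t ^ run n a)"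
    by (rule sum_lev[symmetric]) (auto simp: T_def)
  finally show ?thesis .
qed

end
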